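(* Let $q$ be an odd prime power, $m=2t$, and $n=\frac{q^m+1}{2}$. (1) If $m\ge4$, then every integer $i$ with $\frac{q^t+1}{2}\le i\le q^t+1$, $i\not\equiv0\pmod q$ and $i\notin\{\frac{q^t+1}{2},q^t+1\}$ is a coset leader modulo $n$ with $|C_i|=2m$, while $\frac{q^t+1}{2}$ and $q^t+1$ are not coset leaders modulo $n$. (2) If $m\ge8$, then every integer $i$ with $\frac{q^t+1}{2}\le i\le\frac{q^{t+1}-1}{2}$, $i\not\equiv0\pmod q$ and $i\notin X_1\cup X_2\cup X_3\cup X_4\cup X_5$ is a coset leader modulo $n$ with $|C_i|=2m$, while no element of $X_1\cup\dots\cup X_5$ in this range with $i\not\equiv 0\pmod q$ is a coset leader, where (all parameters integers) $X_1=\{aq^t+b:1\le b\le a\le\frac{q-1}{2}\}$, $X_2=\{aq^t-b:1\le b<a\le\frac{q-1}{2}\}$, $X_3=\{aq^t+\frac{q^t-1}{2}+b,\ aq^t+\frac{q^t+1}{2}-b:1\le b\le a<\frac{q-1}{2}\}$, $X_4=\{a(q^t+1)+\frac{q^t+1}{2}:0\le a<\frac{q-1}{2}\}$, $X_5=\{i:\frac{q^{t+1}-q^2}{2}+1\le i\le\frac{q^{t+1}-1}{2},\ q\nmid i\}$.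
   Context: For $0\le s\le n-1$, $C_s=\{sq^i\bmod n:i\ge0\}$ is the $q$-cyclotomic coset of $s$ modulo $n$; its least element is its coset leader. *)

theory Defs
  imports "HOL-Computational_Algebra.Primes"
begin

definition cyc_coset :: "nat \<Rightarrow> nat \<Rightarrow> nat \<Rightarrow> nat set" where
  "cyc_coset q n s = {s * q ^ i mod n | i. True}"

definition coset_leader :: "nat \<Rightarrow> nat \<Rightarrow> nat \<Rightarrow> bool" where
  "coset_leader q n s \<longleftrightarrow> s < n \<and> s = Min (cyc_coset q n s)"

definition X1 :: "nat \<Rightarrow> nat \<Rightarrow> nat set" where
  "X1 q t = {a * q ^ t + b | a b. 1 \<le> b \<and> b \<le> a \<and> a \<le> (q - 1) div 2}"

definition X2 :: "nat \<Rightarrow> nat \<Rightarrow> nat set" where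
  "X2 q t = {a * q ^ t - b | a b. 1 \<le> b \<and> b < a \<and> a \<le> (q - 1) div 2}"

definition X3 :: "nat \<Rightarrow> nat \<Rightarrow> nat set" where
  "X3 q t = {a * q ^ t + (q ^ t - 1) div 2 + b | a b. 1 \<le> b \<and> b \<le> a \<and> a < (q - 1) div 2}
          \<union> {a * q ^ t + (q ^ t + 1) div 2 - b | a b. 1 \<le> b \<and> b \<le> a \<and> a < (q - 1) div 2}"

definition X4 :: "nat \<Rightarrow> nat \<Rightarrow> nat set" where
  "X4 q t = {a * (q ^ t + 1) + (q ^ t + 1) div 2 | a. a < (q - 1) div 2}"

definition X5 :: "nat \<Rightarrow> nat \<Rightarrow> nat set" where
  "X5 q t = {i. (q ^ (t + 1) - q ^ 2) div 2 + 1 \<le> i \<and> i \<le> (q ^ (t + 1) - 1) div 2 \<and> \<not> q dvd i}"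

end

theory Submission
  imports Defs "HOL-Number_Theory.Cong"
begin


lemma not_leader_witness:
  fixes q n i k :: nat
  assumes "n > 0" "i * q ^ k mod n < i"
  shows "\<not> coset_leader q n i"
proof
  assume L: "coset_leader q n i"
  have fin: "finite (cyc_coset q n i)"
    by (rule finite_subset[of _ "{..<n}"]) (auto simp: cyc_coset_def assms(1))
  have mem: "i * q ^ k mod n \<in> cyc_coset q n i" by (auto simp: cyc_coset_def)
  have "Min (cyc_coset q n i) \<le> i * q ^ k mod n" using Min_le[OF fin mem] .
  with L assms(2) show False unfolding coset_leader_def by linarith
qed

lemma mod_neg_aux:
  fixes a b n :: nat
  assumes "n > 0" "n dvd a + b"
  shows "a mod n = (n - b mod n) mod n"
proof -
  have d: "n dvd a mod n + b mod n"
    using assms(2) by (simp add: dvd_eq_mod_eq_0 mod_add_eq)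
  have lt: "a mod n < n" "b mod n < n" using assms(1) by auto
  show ?thesis
  proof (cases "b mod n = 0")
    case True
    then show ?thesis using d by (simp add: dvd_eq_mod_eq_0)
  next
    case False
    have "a mod n + b mod n = n"
    proof -
      obtain c where c: "a mod n + b mod n = n * c" using d by blast
      have "n * c < n * 2" using lt c by linarith
      hence "c < 2" using assms(1) by simp
      moreover have "c \<noteq> 0" using c False by (cases "c = 0") simp_all
      ultimately have "c = 1" by linarith
      thus ?thesis using c by simp
    qed
    thus ?thesis using lt by (metis add_diff_cancel_right' mod_less)
  qed
qed

lemma leader_core:
  fixes q n i m :: nat
  assumes n: "n > 0" and i: "0 < i" "2*i < n" and m: "m > 0" and dv: "n dvd q^m + 1"
    and H: "\<And>j. 0 < j \<Longrightarrow> j < m \<Longrightarrow> i < i*q^j mod n \<and> i*q^j mod n + i < n"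
  shows "coset_leader q n i \<and> card (cyc_coset q n i) = 2*m"
proof -
  define r where "r k = i*q^k mod n" for k
  have rec: "r (k+m) = (n - r k) mod n" for k
  proof -
    have e: "i*q^(k+m) + i*q^k = i*q^k*(q^m+1)" by (simp add: power_add algebra_simps)
    have "n dvd i*q^(k+m) + i*q^k" unfolding e using dv by (rule dvd_mult)
    thus ?thesis unfolding r_def using mod_neg_aux[OF n] by blast
  qed
  have r0: "r 0 = i" unfolding r_def using i by simp
  have rm: "r m = n - i" using rec[of 0] r0 i by simp
  have cls: "(k mod m = 0 \<longrightarrow> r k = i \<or> r k = n - i) \<and> (k mod m \<noteq> 0 \<longrightarrow> i < r k \<and> r k + i < n)" for k
  proof (induction k rule: less_induct)
    case (less k)
    show ?case
    proof (cases "k < m")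
      case True
      then show ?thesis using H[of k] r0 unfolding r_def by (cases "k = 0") auto
    next
      case False
      define k' where "k' = k - m"
      have kk: "k = k' + m" using False k'_def by simp
      have km: "k mod m = k' mod m" using kk by simp
      have IH: "(k' mod m = 0 \<longrightarrow> r k' = i \<or> r k' = n - i) \<and> (k' mod m \<noteq> 0 \<longrightarrow> i < r k' \<and> r k' + i < n)"
        using less[of k'] kk m by simp
      have rk: "r k = (n - r k') mod n" using rec kk by simp
      show ?thesis
      proof (cases "k' mod m = 0")
        case True
        have "r k = i \<or> r k = n - i"
        proof (cases "r k' = i")
          case True
          then show ?thesis using rk i by simp
        next
          case False
          hence "r k' = n - i" using IH \<open>k' mod m = 0\<close> by blast
          then show ?thesis using rk i by simp
        qed
        then show ?thesis using km True by simp
      next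
        case False
        have a: "i < r k'" "r k' + i < n" using IH False by blast+
        have "r k = n - r k'" using rk a by simp
        moreover have "i < n - r k'" "n - r k' + i < n" using a by linarith+
        ultimately show ?thesis using km False by simp
      qed
    qed
  qed
  have ge: "i \<le> r k" for k using cls[of k] i by auto
  have coset: "cyc_coset q n i = range r" unfolding cyc_coset_def r_def by auto
  have fin: "finite (range r)"
    by (rule finite_subset[of _ "{..<n}"]) (auto simp: r_def n)
  have leader: "coset_leader q n i"
    unfolding coset_leader_def coset
  proof
    show "i < n" using i by simp
    show "i = Min (range r)"
      by (rule sym, rule Min_eqI[OF fin]) (use ge r0 in \<open>auto intro: range_eqI[of _ _ 0]\<close>)
  qed
  have per: "r (k + 2*m) = r k" for k
  proof -
    have "r (k + 2*m) = (n - (n - r k) mod n) mod n" using rec[of "k+m"] rec[of k]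
      by (simp add: mult_2 add.assoc)
    also have "\<dots> = r k"
    proof (cases "r k = 0")
      case True thus ?thesis by simp
    next
      case False
      have "r k < n" unfolding r_def using n by simp
      thus ?thesis using False by simp
    qed
    finally show ?thesis .
  qed
  have perc: "r (j + 2*m*c) = r j" for j c
  proof (induction c)
    case 0 then show ?case by simp
  next
    case (Suc c)
    have "j + 2*m*Suc c = (j + 2*m*c) + 2*m" by simp
    then show ?case using per[of "j + 2*m*c"] Suc by (metis)
  qed
  have img: "range r = r ` {..<2*m}"
  proof
    show "range r \<subseteq> r ` {..<2*m}"
    proof
      fix y assume "y \<in> range r"
      then obtain k where y: "y = r k" by auto
      have e: "k mod (2*m) + 2*m*(k div (2*m)) = k" by simp
      have "r (k mod (2*m) + 2*m*(k div (2*m))) = r (k mod (2*m))" by (rule perc)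
      hence "r k = r (k mod (2*m))" unfolding e .
      moreover have "k mod (2*m) < 2*m" using m by simp
      ultimately show "y \<in> r ` {..<2*m}" using y by auto
    qed
  qed auto
  have cop: "coprime q n"
  proof -
    have c1: "coprime (q^m) (q^m + 1)" by (rule coprime_add_one_right)
    have "m \<noteq> 0" using m by simp
    hence c2: "coprime q (q^m + 1)" using c1 coprime_power_left_iff[of q m "q^m+1"] by simp
    show ?thesis by (rule coprime_divisors[OF dvd_refl dv c2])
  qed
  have inj: "inj_on r {..<2*m}"
  proof (rule inj_onI, rule ccontr)
    fix a b assume a: "a \<in> {..<2*m}" and b: "b \<in> {..<2*m}" and e: "r a = r b" and ne: "a \<noteq> b"
    have main: "False" if ab: "a < b" "b < 2*m" "r a = r b" for a b
    proof -
      define d where "d = b - a"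
      have bd: "b = a + d" "0 < d" "d < 2*m" using ab d_def by auto
      have "[i * q^a = i * q^d * q^a] (mod n)"
        using ab(3) unfolding r_def cong_def bd(1) by (simp add: power_add algebra_simps)
      hence "[i * q^a = (i * q^d) * q^a] (mod n)" by simp
      moreover have "coprime (q^a) n" using cop by simp
      ultimately have "[i = i*q^d] (mod n)"
        using cong_mult_rcancel_nat by blast
      hence rd: "r d = i" unfolding r_def cong_def using i by simp
      show False
      proof (cases "d mod m = 0")
        case True
        then obtain c where c: "d = m * c" by blast
        have "m * c < m * 2" using c bd by simp
        hence "c < 2" by simp
        moreover have "c \<noteq> 0" using c bd by (cases "c = 0") simp_all
        ultimately have "d = m" using c by (cases c) auto
        thus False using rd rm i by simp
      next
        case False
        thus False using cls[of d] rd by simp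
      qed
    qed
    show False
    proof (cases "a < b")
      case True then show False using main[of a b] b e by simp
    next
      case False then show False using main[of b a] a e ne by simp
    qed
  qed
  have "card (cyc_coset q n i) = 2*m"
    unfolding coset img using card_image[OF inj] by simp
  with leader show ?thesis by simp
qed



lemma val_high:
  fixes q t s x :: nat
  assumes q: "q \<ge> 2" and st: "s < t" and nd: "\<not> q dvd x" and xs: "x*q^s < q^t*q^t"
  shows "x*q^s = (x div q^(t-s))*q^t + (x mod q^(t-s)) * q^s"
    and "x mod q^(t-s) \<ge> 1" "(x mod q^(t-s)) * q^s < q^t" "x div q^(t-s) < q^t"
    and "x*q^(t+s) mod (q^t*q^t+1) = (x mod q^(t-s)) * q^s * q^t - x div q^(t-s)"
proof -
  define D where "D = q^(t-s)"
  define E where "E = q^s"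
  define Q where "Q = q^t"
  define u where "u = x div D"
  define r where "r = x mod D"
  have QDE: "Q = D*E"
  proof -
    have "t = (t-s) + s" using st by simp
    hence "q^t = q^(t-s) * q^s" by (metis power_add)
    thus ?thesis unfolding Q_def D_def E_def .
  qed
  have Dpos: "D > 0" "E > 0" using q unfolding D_def E_def by simp_all
  have xur: "x = u*D + r" unfolding u_def r_def by simp
  have r1: "r \<ge> 1"
  proof (rule ccontr)
    assume "\<not> r \<ge> 1"
    hence "D dvd x" unfolding r_def D_def by (simp add: dvd_eq_mod_eq_0)
    moreover have "q dvd D" unfolding D_def using st by simp
    ultimately show False using nd dvd_trans by blast
  qed
  have rD: "r < D" unfolding r_def using Dpos by simp
  have vQ: "r*E < Q"
  proof -
    have "r*E < D*E" using rD Dpos by simp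
    thus ?thesis using QDE by simp
  qed
  have xE: "x*E = u*Q + r*E" unfolding QDE using xur by (simp add: algebra_simps)
  have uQ: "u < Q"
  proof -
    have "u*Q \<le> x*E" using xE by simp
    also have "\<dots> < Q*Q" using xs unfolding E_def Q_def by simp
    finally have "u*Q < Q*Q" .
    thus ?thesis using mult_less_cancel2[of u Q Q] by blast
  qed
  have vE: "r*E \<ge> E" using r1 by simp
  have Q0: "Q > 0" using QDE Dpos by simp
  have uvQ: "u < r*E*Q"
  proof -
    have "1 \<le> r*E" using vE Dpos by linarith
    hence "1*Q \<le> r*E*Q" by (rule mult_le_mono1)
    thus ?thesis using uQ by linarith
  qed
  have big: "x*q^(t+s) = u*(Q*Q+1) + (r*E*Q - u)"
  proof -
    have "x*q^(t+s) = x*E*Q" unfolding E_def Q_def by (simp add: power_add)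
    also have "\<dots> = u*Q*Q + r*E*Q" using xE by (simp add: algebra_simps)
    also have "\<dots> = u*(Q*Q+1) + (r*E*Q - u)" using uvQ by (simp add: algebra_simps)
    finally show ?thesis .
  qed
  have small: "r*E*Q - u < Q*Q+1"
  proof -
    have "r*E*Q \<le> Q*Q" using vQ by simp
    thus ?thesis by linarith
  qed
  have m: "x*q^(t+s) mod (Q*Q+1) = r*E*Q - u"
    unfolding big using small by (simp only: mod_mult_self3 mod_less)
  show "x*q^s = (x div q^(t-s))*q^t + (x mod q^(t-s)) * q^s"
    using xE unfolding u_def r_def D_def E_def Q_def .
  show "x mod q^(t-s) \<ge> 1" using r1 unfolding r_def D_def .
  show "(x mod q^(t-s)) * q^s < q^t" using vQ unfolding r_def D_def E_def Q_def .
  show "x div q^(t-s) < q^t" using uQ unfolding u_def D_def Q_def .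
  show "x*q^(t+s) mod (q^t*q^t+1) = (x mod q^(t-s)) * q^s * q^t - x div q^(t-s)"
    using m unfolding u_def r_def D_def E_def Q_def .
qed

lemma good_x:
  fixes q t x j :: nat
  assumes q3: "q \<ge> 3" and t2: "t \<ge> 2" and nd: "\<not> q dvd x" and xlt: "x < q*q^t"
   and A: "x * q^(t-1) + x < q^t*q^t + 1"
   and B1: "x div q^t < x mod q^t" and B2: "x div q^t + x mod q^t < q^t"
   and C1: "(x div q^(t-1)) * (q^(t-1)+1) + 1 < q*q^t"
   and j: "0 < j" "j < 2*t"
  shows "x < x*q^j mod (q^t*q^t+1) \<and> x*q^j mod (q^t*q^t+1) + x < q^t*q^t+1"
proof -
  define Q where "Q = q^t"
  define N where "N = Q*Q+1"
  have x0: "x > 0" using nd by (cases "x = 0") auto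
  have Qqq: "q*q \<le> Q"
  proof -
    have "q^2 \<le> q^t" using t2 q3 by (intro power_increasing) auto
    thus ?thesis unfolding Q_def by (simp add: power2_eq_square)
  qed
  have A': "x * q^(t-1) + x < N" using A unfolding N_def Q_def .
  show ?thesis
  proof (cases "j < t")
    case True
    have pj: "q^j \<le> q^(t-1)" using True q3 by (intro power_increasing) auto
    have "x*q^j \<le> x*q^(t-1)" using pj by (rule mult_le_mono2)
    hence lt: "x*q^j + x < N" using A' by linarith
    hence md: "x*q^j mod N = x*q^j" by simp
    have "q^1 \<le> q^j" using j q3 by (intro power_increasing) auto
    hence "q \<le> q^j" by simp
    hence "1 < q^j" using q3 by linarith
    hence "x*1 < x*q^j" using x0 by (intro mult_less_mono2) auto
    thus ?thesis using md lt unfolding N_def Q_def by simp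
  next
    case False
    define s where "s = j - t"
    have js: "j = t + s" "s < t" using False j unfolding s_def by auto
    have xs0: "x*q^s \<le> x*q^(t-1)" using js q3 by (intro mult_le_mono2 power_increasing) auto
    have xs: "x*q^s < q^t*q^t" using xs0 A x0 by linarith
    note vh = val_high[OF _ js(2) nd xs]
    define u where "u = x div q^(t-s)"
    define r where "r = x mod q^(t-s)"
    have q2: "q \<ge> 2" using q3 by simp
    have e1: "x*q^s = u*Q + r*q^s" using vh(1)[OF q2] unfolding u_def r_def Q_def .
    have r1: "r \<ge> 1" using vh(2)[OF q2] unfolding r_def .
    have vQ: "r*q^s < Q" using vh(3)[OF q2] unfolding r_def Q_def .
    have uQ: "u < Q" using vh(4)[OF q2] unfolding u_def Q_def .
    have V: "x*q^j mod N = r*q^s*Q - u" using vh(5)[OF q2] js(1) unfolding r_def u_def Q_def N_def by simp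
    have uV: "u < r*q^s*Q"
    proof -
      have "1 \<le> q^s" using q3 by simp
      hence "1*1 \<le> r*q^s" using r1 by (intro mult_le_mono)
      hence "1 \<le> r*q^s" by simp
      hence "1*Q \<le> r*q^s*Q" by (rule mult_le_mono1)
      thus ?thesis using uQ by linarith
    qed
    have goal: "x + u < r*q^s*Q \<and> r*q^s*Q + x < N + u"
    proof (cases "s = 0")
      case True
      have uu: "u = x div Q" unfolding u_def Q_def True by simp
      have rr: "r = x mod Q" unfolding r_def Q_def True by simp
      have Q0: "Q > 0" unfolding Q_def using q3 by simp
      have "x < q*Q" using xlt unfolding Q_def .
      hence uq: "u < q" unfolding uu by (rule less_mult_imp_div_less)
      have xd: "x = u*Q + r" unfolding uu rr by simp
      have b1: "u < r" using B1 unfolding uu rr Q_def .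
      have b2: "u + r < Q" using B2 unfolding uu rr Q_def .
      define d where "d = r - u"
      have d: "r = u + d" "d \<ge> 1" using b1 unfolding d_def by simp_all
      have "3*q \<le> q*q" using q3 by simp
      hence "2*u+2 \<le> q*q" using uq by linarith
      hence Qu: "2*u+2 \<le> Q" using Qqq by linarith
      have "d*(2*u+2) \<le> d*Q" using Qu by (rule mult_le_mono2)
      hence h1: "2*(d*u) + 2*d \<le> d*Q" by (simp add: algebra_simps)
      have h2: "u \<le> d*u" using d(2) by simp
      have h3: "x + u = u*Q + 2*u + d" unfolding xd d(1) by simp
      have h4: "r*q^s*Q = u*Q + d*Q" unfolding d(1) True by (simp add: algebra_simps)
      have f1: "x + u < r*q^s*Q" unfolding h3 h4 using h1 h2 d(2) by linarith
      have "(u + r + 1)*Q \<le> Q*Q" using b2 by (intro mult_le_mono1) simp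
      hence "u*Q + r*Q + Q \<le> Q*Q" by (simp add: algebra_simps)
      moreover have "r < Q" using b2 by simp
      ultimately have f2: "r*q^s*Q + x < N + u" unfolding xd N_def True by simp
      show ?thesis using f1 f2 by simp
    next
      case False
      have rlt: "r < q^(t-s)" unfolding r_def using q3 by simp
      have QQ: "q^(t-s)*q^s = Q" unfolding Q_def using js(2) by (simp add: power_add[symmetric])
      have "(r+1)*q^s \<le> q^(t-s)*q^s" using rlt by (intro mult_le_mono1) simp
      hence "(r+1)*q^s \<le> Q" using QQ by simp
      hence "(r+1)*q^s*Q \<le> Q*Q" by (rule mult_le_mono1)
      hence h1: "r*q^s*Q + q^s*Q \<le> Q*Q" by (simp add: algebra_simps)
      have "q^1 \<le> q^s" using False q3 by (intro power_increasing) auto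
      hence "q*Q \<le> q^s*Q" by simp
      hence f2: "r*q^s*Q + x < N + u" using h1 xlt unfolding N_def Q_def by linarith
      have f1: "x + u < r*q^s*Q"
      proof (cases "s = 1")
        case True
        define P where "P = q^(t-1)"
        have uu: "u = x div P" unfolding u_def P_def True ..
        have rr: "r = x mod P" unfolding r_def P_def True ..
        have xd: "x = u*P + r" unfolding uu rr by simp
        define r' where "r' = r - 1"
        have r': "r = 1 + r'" using r1 unfolding r'_def by simp
        have c1: "u*(P+1) + 1 < q*Q" using C1 unfolding uu P_def Q_def .
        have "1 \<le> q*Q" using c1 by linarith
        hence "r'*1 \<le> r'*(q*Q)" by (rule mult_le_mono2)
        hence "r' \<le> r'*(q*Q)" by simp
        moreover have "x + u = u*(P+1) + 1 + r'" unfolding xd r' by (simp add: algebra_simps)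
        moreover have "r*(q*Q) = q*Q + r'*(q*Q)" unfolding r' by (simp add: algebra_simps)
        ultimately have "x + u < r*(q*Q)" using c1 by linarith
        thus ?thesis unfolding True by (simp add: algebra_simps)
      next
        case False
        hence s2: "s \<ge> 2" using \<open>s \<noteq> 0\<close> by simp
        have "q^2 \<le> q^s" using s2 q3 by (intro power_increasing) auto
        hence "q*q \<le> q^s" by (simp add: power2_eq_square)
        moreover have "q^s \<le> r*q^s" using r1 by simp
        moreover have "3*q \<le> q*q" using q3 by simp
        ultimately have "3*q \<le> r*q^s" by linarith
        hence "3*q*Q \<le> r*q^s*Q" by (rule mult_le_mono1)
        moreover have "u \<le> x" unfolding u_def by simp
        ultimately show ?thesis using xlt unfolding Q_def by linarith
      qed
      show ?thesis using f1 f2 by simp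
    qed
    thus ?thesis using V uV unfolding N_def Q_def by linarith
  qed
qed


lemma negstep:
  fixes q t x k :: nat
  shows "x*q^(k+2*t) mod (q^t*q^t+1) = (q^t*q^t+1 - x*q^k mod (q^t*q^t+1)) mod (q^t*q^t+1)"
proof -
  have p: "q^(k+2*t) = q^k*(q^t*q^t)" by (simp only: power_add mult_2)
  have e: "x*q^(k+2*t) + x*q^k = x*q^k*(q^t*q^t+1)"
    unfolding p by (simp add: algebra_simps)
  have "q^t*q^t+1 dvd x*q^(k+2*t) + x*q^k" unfolding e by (rule dvd_triv_right)
  thus ?thesis by (rule mod_neg_aux[rotated]) simp
qed

lemma bad_t:
  fixes q t x u v :: nat
  assumes x: "x = u*q^t + v" and v: "1 \<le> v" "v \<le> u" and u: "u < q^t"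
  shows "x*q^t mod (q^t*q^t+1) < x"
proof -
  define Q where "Q = q^t"
  have "1*Q \<le> v*Q" using v by (intro mult_le_mono1) simp
  moreover have "u < Q" using u unfolding Q_def .
  ultimately have uQ: "u < v*Q" by linarith
  have e: "x*Q = u*(Q*Q+1) + (v*Q - u)" using uQ unfolding x Q_def[symmetric] by (simp add: algebra_simps)
  have vQ: "v*Q \<le> u*Q" using v by simp
  have lt: "v*Q - u < Q*Q+1"
  proof -
    have "u*Q < Q*Q" using u unfolding Q_def[symmetric] by (intro mult_less_mono1) auto
    hence "v*Q < Q*Q" using vQ by linarith
    thus ?thesis by linarith
  qed
  have "x*Q mod (Q*Q+1) = v*Q - u" unfolding e using lt by (simp only: mod_mult_self3 mod_less)
  moreover have "v*Q - u < x" using vQ unfolding x Q_def[symmetric] using v by linarith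
  ultimately show ?thesis unfolding Q_def by simp
qed

lemma bad_tm:
  fixes q t x u v :: nat
  assumes x: "x = u*q^t + v" and v: "1 \<le> v" "v < q^t" and u: "u < q^t" and uv: "u + v \<ge> q^t + 1"
  shows "x*q^(t+2*t) mod (q^t*q^t+1) < x"
proof -
  define Q where "Q = q^t"
  have Q1: "1 \<le> Q" using v unfolding Q_def by linarith
  have "1*Q \<le> v*Q" using v by (intro mult_le_mono1) simp
  moreover have "u < Q" using u unfolding Q_def .
  ultimately have uQ: "u < v*Q" by linarith
  have e: "x*Q = u*(Q*Q+1) + (v*Q - u)" using uQ unfolding x Q_def[symmetric] by (simp add: algebra_simps)
  have "v*Q < Q*Q" using v unfolding Q_def[symmetric] using Q1 by simp
  hence lt: "v*Q - u < Q*Q+1" by linarith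
  have m1: "x*Q mod (Q*Q+1) = v*Q - u" unfolding e using lt by (simp only: mod_mult_self3 mod_less)
  have w0: "v*Q - u \<noteq> 0" using uQ by simp
  have "x*q^(t+2*t) mod (Q*Q+1) = (Q*Q+1 - (v*Q - u)) mod (Q*Q+1)"
    using negstep[of x q t t] m1 unfolding Q_def by simp
  also have "\<dots> = Q*Q+1 - (v*Q - u)" using w0 lt by simp
  also have "\<dots> < x"
  proof -
    have "(Q+1)*Q \<le> (u+v)*Q" using uv unfolding Q_def[symmetric] by (intro mult_le_mono1)
    hence "Q*Q + Q \<le> u*Q + v*Q" by (simp add: algebra_simps)
    thus ?thesis unfolding x Q_def[symmetric] using uQ u v unfolding Q_def[symmetric] by linarith
  qed
  finally show ?thesis unfolding Q_def .
qed

lemma bad_5: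
  fixes q t x :: nat
  assumes q0: "q > 0" and a: "x*q^(t-1) < q^t*q^t+1" and b: "q^t*q^t+1 < x*q^(t-1) + x"
  shows "x*q^(t-1+2*t) mod (q^t*q^t+1) < x"
proof -
  have m: "x*q^(t-1) mod (q^t*q^t+1) = x*q^(t-1)" using a by simp
  have "x > 0" using b by (cases "x = 0") auto
  hence nz: "x*q^(t-1) \<noteq> 0" using q0 by simp
  have "x*q^(t-1+2*t) mod (q^t*q^t+1) = (q^t*q^t+1 - x*q^(t-1)) mod (q^t*q^t+1)"
    using negstep[of x q "t-1" t] m by simp
  also have "\<dots> = q^t*q^t+1 - x*q^(t-1)"
  proof (rule mod_less)
    have "x*q^(t-1) > 0" using nz neq0_conv by blast
    thus "q^t*q^t+1 - x*q^(t-1) < q^t*q^t+1" by linarith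
  qed
  also have "\<dots> < x"
  proof -
    have gen: "\<And>y N. 0 < x \<Longrightarrow> N < y + x \<Longrightarrow> N - y < x" by arith
    show ?thesis by (rule gen[OF \<open>x > 0\<close> b])
  qed
  finally show ?thesis .
qed

lemma n_facts:
  fixes q t :: nat
  assumes "odd q"
  shows "2 * ((q^(2*t)+1) div 2) = q^t*q^t+1" "q^(2*t) = q^t*q^t"
proof -
  show e: "q^(2*t) = q^t*q^t" by (simp add: mult_2 power_add)
  have "odd (q^(2*t))" using assms by simp
  hence "even (q^(2*t)+1)" by simp
  hence "2 * ((q^(2*t)+1) div 2) = q^(2*t)+1" by (rule even_two_times_div_two)
  thus "2 * ((q^(2*t)+1) div 2) = q^t*q^t+1" using e by simp
qed

lemma neg_from_x:
  fixes q t x i k :: nat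
  assumes q: "odd q" and x: "x = 2*i" and w: "x*q^k mod (q^t*q^t+1) < x"
  shows "\<not> coset_leader q ((q^(2*t)+1) div 2) i"
proof -
  define n where "n = (q^(2*t)+1) div 2"
  have nn: "2*n = q^t*q^t+1" unfolding n_def using n_facts[OF q] by simp
  have "x*q^k mod (2*n) = 2*(i*q^k mod n)" unfolding x using mod_mult_mult1[of 2 "i*q^k" n] by (simp only: mult.assoc)
  hence "i*q^k mod n < i" using w nn x by simp
  moreover have "n > 0" using nn by simp
  ultimately show ?thesis unfolding n_def[symmetric] by (rule not_leader_witness[rotated])
qed

lemma pos_from_x:
  fixes q t x i :: nat
  assumes q: "odd q" and q3: "q \<ge> 3" and t2: "t \<ge> 2" and x: "x = 2*i" and nd: "\<not> q dvd x" and xlt: "x < q*q^t"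
   and A: "x * q^(t-1) + x < q^t*q^t + 1"
   and B1: "x div q^t < x mod q^t" and B2: "x div q^t + x mod q^t < q^t"
   and C1: "(x div q^(t-1)) * (q^(t-1)+1) + 1 < q*q^t"
  shows "coset_leader q ((q^(2*t)+1) div 2) i \<and> card (cyc_coset q ((q^(2*t)+1) div 2) i) = 2*(2*t)"
proof -
  define n where "n = (q^(2*t)+1) div 2"
  define Q where "Q = q^t"
  have nn: "2*n = Q*Q+1" unfolding n_def Q_def using n_facts[OF q] by simp
  have i0: "0 < i" using nd x by (cases "i = 0") auto
  have Qqq: "q*q \<le> Q"
  proof -
    have "q^2 \<le> q^t" using t2 q3 by (intro power_increasing) auto
    thus ?thesis unfolding Q_def by (simp add: power2_eq_square)
  qed
  have "2*q \<le> q*q" using q3 by simp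
  hence "2*q \<le> Q" using Qqq by linarith
  hence "2*q*Q \<le> Q*Q" by (rule mult_le_mono1)
  hence "2*x < Q*Q" using xlt unfolding Q_def[symmetric] by linarith
  hence i2: "2*i < n" using nn x by linarith
  have dv: "n dvd q^(2*t) + 1"
  proof -
    have "q^(2*t) + 1 = 2*n" using nn n_facts(2)[OF q, of t] unfolding Q_def by simp
    thus ?thesis by simp
  qed
  have H: "i < i*q^j mod n \<and> i*q^j mod n + i < n" if j: "0 < j" "j < 2*t" for j
  proof -
    have g: "x < x*q^j mod (q^t*q^t+1) \<and> x*q^j mod (q^t*q^t+1) + x < q^t*q^t+1"
      by (rule good_x[OF q3 t2 nd xlt A B1 B2 C1 j])
    have "x*q^j mod (2*n) = 2*(i*q^j mod n)" unfolding x using mod_mult_mult1[of 2 "i*q^j" n] by (simp only: mult.assoc)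
    thus ?thesis using g nn x unfolding Q_def by simp
  qed
  have "coset_leader q n i \<and> card (cyc_coset q n i) = 2*(2*t)"
    by (rule leader_core[OF _ i0 i2 _ dv H]) (use nn t2 in auto)
  thus ?thesis unfolding n_def .
qed



lemma basic:
  fixes q t :: nat
  assumes q: "odd q" and q3: "q \<ge> 3" and t: "t \<ge> 1"
  shows "q*q^(t-1) = q^t" "q^(t+1) = q*q^t" "q^2 = q*q" "odd (q^t)"
    "even (q*q^t - q*q)" "2*((q^t+1) div 2) = q^t+1" "2*((q^t-1) div 2) = q^t - 1"
    "2*((q-1) div 2) = q-1" "q dvd q^t" "q*q \<le> q^t \<or> t = 1" "q \<le> q^t"
proof -
  show "q*q^(t-1) = q^t" using t by (metis Suc_diff_1 less_le_trans power_Suc zero_less_one)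
  show "q^(t+1) = q*q^t" by simp
  show "q^2 = q*q" by (simp add: power2_eq_square)
  show o: "odd (q^t)" using q by simp
  show "q \<le> q^t" using t q3 by (metis One_nat_def power_increasing power_one_right le_trans one_le_numeral)
  hence "q*q \<le> q*q^t" by simp
  have "even (q^t - q)" using o q \<open>q \<le> q^t\<close> by simp
  hence "even (q*(q^t - q))" by simp
  thus "even (q*q^t - q*q)" by (simp add: diff_mult_distrib2)
  show "2*((q^t+1) div 2) = q^t+1" using o by simp
  show "2*((q^t-1) div 2) = q^t - 1" using o by simp
  show "2*((q-1) div 2) = q-1" using q by simp
  show "q dvd q^t" using t by (simp add: dvd_power)
  show "q*q \<le> q^t \<or> t = 1"
  proof (cases "t = 1")
    case False
    hence "q^2 \<le> q^t" using t q3 by (intro power_increasing) auto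
    thus ?thesis by (simp add: power2_eq_square)
  qed simp
qed

lemma neg_X1:
  fixes q t i :: nat
  assumes q: "odd q" "q \<ge> 3" "t \<ge> 1" and i: "i \<in> X1 q t"
  shows "\<not> coset_leader q ((q^(2*t)+1) div 2) i"
proof -
  obtain a b where ab: "i = a*q^t + b" "1 \<le> b" "b \<le> a" "a \<le> (q-1) div 2"
    using i unfolding X1_def by blast
  have "2*a \<le> q - 1" using ab(4) basic(8)[OF q] by linarith
  hence u: "2*a < q^t" using basic(11)[OF q] q by linarith
  have x: "2*i = (2*a)*q^t + 2*b" using ab(1) by simp
  have "2*i*q^t mod (q^t*q^t+1) < 2*i" by (rule bad_t[OF x]) (use ab u in auto)
  thus ?thesis by (rule neg_from_x[OF q(1) refl])
qed

lemma neg_X2: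
  fixes q t i :: nat
  assumes q: "odd q" "q \<ge> 3" "t \<ge> 1" and i: "i \<in> X2 q t"
  shows "\<not> coset_leader q ((q^(2*t)+1) div 2) i"
proof -
  obtain a b where ab: "i = a*q^t - b" "1 \<le> b" "b < a" "a \<le> (q-1) div 2"
    using i unfolding X2_def by blast
  define Q where "Q = q^t"
  have "2*a \<le> q - 1" using ab(4) basic(8)[OF q] by linarith
  hence u: "2*a < Q" using basic(11)[OF q] q unfolding Q_def by linarith
  have aQ: "a*Q \<ge> 1*Q" using ab by (intro mult_le_mono1) simp
  have x: "2*i = (2*a-1)*Q + (Q - 2*b)"
  proof -
    have "(2*a-1)*Q = 2*(a*Q) - Q" by (simp add: diff_mult_distrib)
    thus ?thesis using ab(1) aQ u ab unfolding Q_def[symmetric] by simp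
  qed
  have "2*i*q^(t+2*t) mod (q^t*q^t+1) < 2*i"
    by (rule bad_tm[OF x[unfolded Q_def]]) (use ab u in \<open>auto simp: Q_def\<close>)
  thus ?thesis by (rule neg_from_x[OF q(1) refl])
qed

lemma neg_X3:
  fixes q t i :: nat
  assumes q: "odd q" "q \<ge> 3" "t \<ge> 1" and i: "i \<in> X3 q t"
  shows "\<not> coset_leader q ((q^(2*t)+1) div 2) i"
proof -
  define Q where "Q = q^t"
  have h1: "2*((Q+1) div 2) = Q+1" "2*((Q-1) div 2) = Q-1" using basic(6,7)[OF q] unfolding Q_def by auto
  have Q1: "Q \<ge> 1" using basic(11)[OF q] q unfolding Q_def by linarith
  from i consider
      (a) a b where "i = a * Q + (Q - 1) div 2 + b" "1 \<le> b" "b \<le> a" "a < (q - 1) div 2"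
    | (b) a b where "i = a * Q + (Q + 1) div 2 - b" "1 \<le> b" "b \<le> a" "a < (q - 1) div 2"
    unfolding X3_def Q_def by blast
  then show ?thesis
  proof cases
    case (a a b)
    have "2*a < q - 1" using a(4) basic(8)[OF q] by linarith
    hence u: "2*a+1 < Q" using basic(11)[OF q] q unfolding Q_def by linarith
    have x: "2*i = (2*a+1)*Q + (2*b-1)" using a(1,2) h1 Q1 by (simp add: algebra_simps)
    have "2*i*q^t mod (q^t*q^t+1) < 2*i"
      by (rule bad_t[OF x[unfolded Q_def]]) (use a u in \<open>auto simp: Q_def\<close>)
    thus ?thesis by (rule neg_from_x[OF q(1) refl])
  next
    case (b a b)
    have "2*a < q - 1" using b(4) basic(8)[OF q] by linarith
    hence u: "2*a+1 < Q" using basic(11)[OF q] q unfolding Q_def by linarith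
    have x: "2*i = (2*a)*Q + (Q+1-2*b)" using b(1,2,3) h1 u by (simp add: algebra_simps)
    have "2*i*q^(t+2*t) mod (q^t*q^t+1) < 2*i"
      by (rule bad_tm[OF x[unfolded Q_def]]) (use b u in \<open>auto simp: Q_def\<close>)
    thus ?thesis by (rule neg_from_x[OF q(1) refl])
  qed
qed

lemma neg_X4:
  fixes q t i :: nat
  assumes q: "odd q" "q \<ge> 3" "t \<ge> 1" and i: "i \<in> X4 q t"
  shows "\<not> coset_leader q ((q^(2*t)+1) div 2) i"
proof -
  define Q where "Q = q^t"
  have h1: "2*((Q+1) div 2) = Q+1" using basic(6)[OF q] unfolding Q_def by auto
  obtain a where a: "i = a * (Q + 1) + (Q + 1) div 2" "a < (q - 1) div 2"
    using i unfolding X4_def Q_def by blast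
  have "2*a < q - 1" using a(2) basic(8)[OF q] by linarith
  hence u: "2*a+1 < Q" using basic(11)[OF q] q unfolding Q_def by linarith
  have x: "2*i = (2*a+1)*Q + (2*a+1)" using a(1) h1 by (simp add: algebra_simps)
  have "2*i*q^t mod (q^t*q^t+1) < 2*i"
    by (rule bad_t[OF x[unfolded Q_def]]) (use u in \<open>auto simp: Q_def\<close>)
  thus ?thesis by (rule neg_from_x[OF q(1) refl])
qed

lemma neg_X5:
  fixes q t i :: nat
  assumes q: "odd q" "q \<ge> 3" "t \<ge> 4" and i: "i \<in> X5 q t"
  shows "\<not> coset_leader q ((q^(2*t)+1) div 2) i"
proof -
  have t1: "t \<ge> 1" using q by simp
  note b = basic[OF q(1,2) t1]
  define Q where "Q = q^t"
  define P where "P = q^(t-1)"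
  define x where "x = 2*i"
  have qP: "q*P = Q" using b(1) unfolding P_def Q_def .
  have lo: "(q*Q - q*q) div 2 + 1 \<le> i" and hi: "i \<le> (q*Q - 1) div 2"
    using i b(2,3) unfolding X5_def Q_def by auto
  have D: "2*((q*Q - q*q) div 2) = q*Q - q*q" using b(5) unfolding Q_def by simp
  have qqQ: "q*q \<le> q*Q" using b(11) unfolding Q_def by simp
  have x1: "x + q*q \<ge> q*Q + 2" using lo D qqQ unfolding x_def by linarith
  have hd: "2*((q*Q - 1) div 2) \<le> q*Q - 1" by simp
  have qq9: "q*q \<ge> 3*3" using q by (intro mult_le_mono) auto
  hence "q*Q \<ge> 1" using qqQ by linarith
  hence x2: "x + 1 \<le> q*Q" using hi hd unfolding x_def by linarith
  have P3: "q^3 \<le> P" unfolding P_def using q by (intro power_increasing) auto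
  have "3*(q*q) \<le> q*(q*q)" using q by (intro mult_le_mono1) simp
  moreover have "q*(q*q) \<le> P" using P3 by (simp add: power3_eq_cube mult.assoc)
  ultimately have P3': "3*(q*q) \<le> P" by linarith
  have e1: "q*Q*P = Q*Q" using qP by (metis mult.assoc mult.commute)
  have e2: "q*Q = q*q*P" using qP by (metis mult.assoc)
  have "(x + 1)*P \<le> (q*Q)*P" using x2 by (rule mult_le_mono1)
  moreover have "(x + 1)*P = x*P + P" by (simp add: algebra_simps)
  ultimately have "x*P + P \<le> Q*Q" using e1 by linarith
  moreover have "P > 0" using P3' qq9 by linarith
  ultimately have c1: "x*P < Q*Q+1" by linarith
  have "(q*Q + 2)*(P+1) \<le> (x + q*q)*(P+1)" using x1 by (rule mult_le_mono1)
  moreover have "(q*Q + 2)*(P+1) = q*Q*P + q*Q + 2*P + 2" by (simp add: algebra_simps)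
  moreover have "(x + q*q)*(P+1) = x*P + x + q*q*P + q*q" by (simp add: algebra_simps)
  ultimately have "q*Q*P + q*Q + 2*P + 2 \<le> x*P + x + q*q*P + q*q" by linarith
  hence "Q*Q + 2*P + 2 \<le> x*P + x + q*q" using e1 e2 by linarith
  hence c2: "Q*Q+1 < x*P + x" using P3' by linarith
  have "x*q^(t-1+2*t) mod (q^t*q^t+1) < x"
    by (rule bad_5) (use c1 c2 q in \<open>auto simp: P_def Q_def\<close>)
  thus ?thesis unfolding x_def by (rule neg_from_x[OF q(1) refl])
qed

lemma odd_dvd2:
  fixes q i :: nat
  assumes "odd q" "q dvd 2*i" shows "q dvd i"
proof -
  have "coprime q 2" using assms(1) by simp
  thus ?thesis using assms(2) by (metis coprime_dvd_mult_right_iff mult.commute)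
qed

lemma classify_A:
  fixes q t i :: nat
  assumes q: "odd q" "q \<ge> 3" "t \<ge> 4" and hi: "i \<le> (q^(t+1)-1) div 2" and nd: "\<not> q dvd i"
    and nA: "\<not> (2*i) * q^(t-1) + 2*i < q^t*q^t + 1"
  shows "i \<in> X5 q t"
proof -
  have t1: "t \<ge> 1" using q by simp
  note b = basic[OF q(1,2) t1]
  define Q where "Q = q^t"
  define P where "P = q^(t-1)"
  define x where "x = 2*i"
  have qP: "q*P = Q" using b(1) unfolding P_def Q_def .
  have e1: "q*Q*P = Q*Q" using qP by (metis mult.assoc mult.commute)
  have e2: "q*Q = q*q*P" using qP by (metis mult.assoc)
  have qq9: "q*q \<ge> 3*3" using q by (intro mult_le_mono) auto
  have nA': "x*P + x \<ge> Q*Q + 1" using nA unfolding x_def P_def Q_def by linarith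
  have lt: "q*Q - q*q < x"
  proof (rule ccontr)
    assume "\<not> q*Q - q*q < x"
    moreover have "q*q \<le> q*Q" using b(11) unfolding Q_def by simp
    ultimately have "x + q*q \<le> q*Q" by linarith
    hence "(x + q*q)*(P+1) \<le> (q*Q)*(P+1)" by (rule mult_le_mono1)
    moreover have "(x + q*q)*(P+1) = x*P + x + q*q*P + q*q" by (simp add: algebra_simps)
    moreover have "(q*Q)*(P+1) = q*Q*P + q*Q" by (simp add: algebra_simps)
    ultimately have "x*P + x + q*q \<le> Q*Q" using e1 e2 by linarith
    thus False using nA' qq9 by linarith
  qed
  have "2*((q*Q - q*q) div 2) \<le> q*Q - q*q" by simp
  hence "(q*Q - q*q) div 2 + 1 \<le> i" using lt unfolding x_def by linarith
  thus ?thesis using hi nd unfolding X5_def b(2) b(3) Q_def by simp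
qed

lemma xuv_facts:
  fixes q t i :: nat
  assumes q: "odd q" "q \<ge> 3" "t \<ge> 1" and nd: "\<not> q dvd i" and xlt: "2*i < q*q^t"
  shows "2*i = (2*i div q^t)*q^t + 2*i mod q^t" "2*i mod q^t \<ge> 1" "2*i div q^t < q"
    "even (2*i div q^t) \<longleftrightarrow> even (2*i mod q^t)" "2*i mod q^t < q^t"
proof -
  note b = basic[OF q]
  define Q where "Q = q^t"
  define u where "u = 2*i div Q"
  define v where "v = 2*i mod Q"
  have Q0: "Q > 0" unfolding Q_def using q by simp
  show "2*i = (2*i div q^t)*q^t + 2*i mod q^t" by (rule div_mult_mod_eq[symmetric])
  have x: "2*i = u*Q + v" unfolding u_def v_def by (rule div_mult_mod_eq[symmetric])
  show "2*i mod q^t \<ge> 1"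
  proof (rule ccontr)
    assume "\<not> 2*i mod q^t \<ge> 1"
    hence "q^t dvd 2*i" by (simp add: dvd_eq_mod_eq_0)
    hence "q dvd 2*i" using b(9) dvd_trans by blast
    thus False using nd odd_dvd2[OF q(1)] by blast
  qed
  show "2*i div q^t < q" using xlt by (simp add: less_mult_imp_div_less)
  have "odd Q" using b(4) unfolding Q_def .
  hence "even (u*Q + v) \<longleftrightarrow> (even u \<longleftrightarrow> even v)" by auto
  thus "even (2*i div q^t) \<longleftrightarrow> even (2*i mod q^t)" using x unfolding u_def v_def Q_def by simp
  show "2*i mod q^t < q^t" using Q0 unfolding Q_def by simp
qed

lemma classify_B1:
  fixes q t i :: nat
  assumes q: "odd q" "q \<ge> 3" "t \<ge> 1" and nd: "\<not> q dvd i" and xlt: "2*i < q*q^t"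
    and nB: "\<not> 2*i div q^t < 2*i mod q^t"
  shows "i \<in> X1 q t \<union> X3 q t \<union> X4 q t"
proof -
  note b = basic[OF q]
  note f = xuv_facts[OF q nd xlt]
  define Q where "Q = q^t"
  define u where "u = 2*i div Q"
  define v where "v = 2*i mod Q"
  have x: "2*i = u*Q + v" and v1: "v \<ge> 1" and uq: "u < q" and par: "even u \<longleftrightarrow> even v"
    and vu: "v \<le> u"
    using f nB unfolding u_def v_def Q_def by auto
  have hq: "2*((q-1) div 2) = q-1" using b(8) .
  show ?thesis
  proof (cases "even u")
    case True
    then obtain a where a: "u = 2*a" by blast
    from True par obtain c where c: "v = 2*c" by blast
    have i: "i = a*Q + c" using x a c by simp
    have "c \<ge> 1" "c \<le> a" "a \<le> (q-1) div 2" using v1 vu uq c a hq by auto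
    hence "i \<in> X1 q t" unfolding X1_def Q_def[symmetric] using i by blast
    thus ?thesis by simp
  next
    case False
    then obtain a where a: "u = 2*a+1" using oddE by blast
    from False par obtain c where c: "v = 2*c+1" using oddE by blast
    have h6: "2*((Q+1) div 2) = Q+1" using b(6) unfolding Q_def .
    have h7: "2*((Q-1) div 2) = Q-1" using b(7) unfolding Q_def .
    have Q1: "Q \<ge> 1" using b(11) q unfolding Q_def by linarith
    have i: "i = a*Q + (Q+1) div 2 + c" using x a c h6 by (simp add: algebra_simps)
    have ca: "c \<le> a" using vu a c by simp
    have "2*a + 1 < q" using uq a by simp
    hence "2*a + 1 \<noteq> q - 1" using q(1) by (cases "q") auto
    hence aq: "a < (q-1) div 2" using uq a hq by linarith
    show ?thesis
    proof (cases "c = a")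
      case True
      have "i = a*(Q+1) + (Q+1) div 2" using i True by (simp add: algebra_simps)
      hence "i \<in> X4 q t" unfolding X4_def Q_def[symmetric] using aq by blast
      thus ?thesis by simp
    next
      case False
      have "i = a*Q + (Q-1) div 2 + (c+1)" using i h6 h7 Q1 by linarith
      moreover have "1 \<le> c+1" "c+1 \<le> a" using ca False by auto
      ultimately have "i \<in> X3 q t" unfolding X3_def Q_def[symmetric] using aq by blast
      thus ?thesis by simp
    qed
  qed
qed

lemma classify_B2:
  fixes q t i :: nat
  assumes q: "odd q" "q \<ge> 3" "t \<ge> 1" and nd: "\<not> q dvd i" and xlt: "2*i < q*q^t"
    and hi: "i \<le> (q^(t+1)-1) div 2"
    and B1: "2*i div q^t < 2*i mod q^t"
    and nB: "\<not> 2*i div q^t + 2*i mod q^t < q^t"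
  shows "i \<in> X2 q t \<union> X3 q t \<union> X5 q t"
proof -
  note b = basic[OF q]
  note f = xuv_facts[OF q nd xlt]
  define Q where "Q = q^t"
  define u where "u = 2*i div Q"
  define v where "v = 2*i mod Q"
  have x: "2*i = u*Q + v" and v1: "v \<ge> 1" and uq: "u < q" and par: "even u \<longleftrightarrow> even v"
    and vQ: "v < Q" and uvQ: "u + v \<ge> Q"
    using f nB unfolding u_def v_def Q_def by auto
  have hq: "2*((q-1) div 2) = q-1" using b(8) .
  have h6: "2*((Q+1) div 2) = Q+1" using b(6) unfolding Q_def .
  have oQ: "odd Q" using b(4) unfolding Q_def .
  have "even (u + v)" using par by auto
  hence "u + v \<noteq> Q" using oQ by auto
  hence uv: "u + v \<ge> Q + 1" using uvQ by linarith
  show ?thesis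
  proof (cases "u = q - 1")
    case True
    have "u*Q + Q = q*Q" using True q by (metis Suc_diff_1 add.commute le_less_trans mult_Suc not_less zero_less_numeral less_numeral_extra(1) numeral_le_iff)
    hence xx: "2*i + u \<ge> q*Q + 1" using x uv by linarith
    have "q*q \<ge> 2*q" using q by simp
    moreover have "q*q \<le> q*Q" using b(11) unfolding Q_def by simp
    ultimately have lt: "q*Q - q*q < 2*i" using xx True q(2) by linarith
    have "2*((q*Q - q*q) div 2) \<le> q*Q - q*q" by simp
    hence "(q*Q - q*q) div 2 + 1 \<le> i" using lt by linarith
    hence "i \<in> X5 q t" using hi nd unfolding X5_def b(2) b(3) Q_def by simp
    thus ?thesis by simp
  next
    case False
    hence uq1: "u < q - 1" using uq by simp
    define c where "c = Q - v"
    have c1: "c \<ge> 1" "c + 1 \<le> u" "v = Q - c" "c \<le> Q" using vQ uv unfolding c_def by auto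
    show ?thesis
    proof (cases "even u")
      case False
      then obtain a0 where a0: "u = 2*a0+1" using oddE by blast
      define a where "a = a0 + 1"
      have "odd v" using False par by simp
      hence "even c" using oQ c1(3,4) unfolding c_def by (simp add: even_diff_nat)
      then obtain bb where bb: "c = 2*bb" by blast
      have "2*i = (2*a - 1)*Q + Q - 2*bb" using x a0 a_def c1(3,4) bb by simp
      hence "2*i = 2*a*Q - 2*bb" by (simp add: algebra_simps a_def)
      hence i: "i = a*Q - bb" by simp
      have "1 \<le> bb" "bb < a" "a \<le> (q-1) div 2" using c1 bb a0 a_def uq hq by auto
      hence "i \<in> X2 q t" unfolding X2_def Q_def[symmetric] using i by blast
      thus ?thesis by simp
    next
      case True
      then obtain a where a: "u = 2*a" by blast
      have "even v" using True par by simp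
      hence "odd c" using oQ c1(3,4) unfolding c_def by (simp add: even_diff_nat)
      then obtain b0 where b0: "c = 2*b0+1" using oddE by blast
      define bb where "bb = b0 + 1"
      have i: "i = a*Q + (Q+1) div 2 - bb" using x a c1(3,4) b0 h6 unfolding bb_def by simp
      have "1 \<le> bb" "bb \<le> a" "a < (q-1) div 2" using c1 b0 a bb_def uq1 hq by auto
      hence "i \<in> X3 q t" unfolding X3_def Q_def[symmetric] using i by blast
      thus ?thesis by simp
    qed
  qed
qed

lemma pos_part2:
  fixes q t i :: nat
  assumes q: "odd q" "q \<ge> 3" "t \<ge> 4" and hi: "i \<le> (q^(t+1)-1) div 2" and nd: "\<not> q dvd i"
    and nX: "i \<notin> X1 q t \<union> X2 q t \<union> X3 q t \<union> X4 q t \<union> X5 q t"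
  shows "coset_leader q ((q^(2*t)+1) div 2) i \<and> card (cyc_coset q ((q^(2*t)+1) div 2) i) = 2*(2*t)"
proof -
  have t1: "t \<ge> 1" using q by simp
  have t2: "t \<ge> 2" using q by simp
  note b = basic[OF q(1,2) t1]
  define Q where "Q = q^t"
  define P where "P = q^(t-1)"
  have qq9: "q*q \<ge> 3*3" using q by (intro mult_le_mono) auto
  have qqQ: "q*q \<le> q*Q" using b(11) unfolding Q_def by simp
  have "2*((q*Q - 1) div 2) \<le> q*Q - 1" by simp
  hence xlt: "2*i < q*q^t" using hi qqQ qq9 unfolding b(2) Q_def[symmetric] by linarith
  have ndx: "\<not> q dvd 2*i" using nd odd_dvd2[OF q(1)] by blast
  have A: "(2*i) * q^(t-1) + 2*i < q^t*q^t + 1"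
    using classify_A[OF q hi nd] nX by blast
  have B1: "2*i div q^t < 2*i mod q^t"
    using classify_B1[OF q(1,2) t1 nd xlt] nX by blast
  have B2: "2*i div q^t + 2*i mod q^t < q^t"
    using classify_B2[OF q(1,2) t1 nd xlt hi B1] nX by blast
  have C1: "(2*i div q^(t-1)) * (q^(t-1)+1) + 1 < q*q^t"
  proof -
    define w where "w = 2*i div P"
    have qP: "q*P = Q" using b(1) unfolding P_def Q_def .
    have e2: "q*Q = q*q*P" using qP by (metis mult.assoc)
    have "2*i < (q*q)*P" using xlt e2 unfolding Q_def by simp
    hence w: "w < q*q" unfolding w_def by (rule less_mult_imp_div_less)
    have P3: "q^3 \<le> P" unfolding P_def using q by (intro power_increasing) auto
    have "3*(q*q) \<le> q*(q*q)" using q by (intro mult_le_mono1) simp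
    moreover have "q*(q*q) \<le> P" using P3 by (simp add: power3_eq_cube mult.assoc)
    ultimately have P3': "3*(q*q) \<le> P" by linarith
    have "(w+1)*P \<le> (q*q)*P" using w by (intro mult_le_mono1) simp
    moreover have "(w+1)*P = w*P + P" by (simp add: algebra_simps)
    moreover have "w*(P+1) = w*P + w" by (simp add: algebra_simps)
    ultimately have "w*(P+1) + 1 < q*Q" using e2 w P3' qq9 by linarith
    thus ?thesis unfolding w_def P_def Q_def .
  qed
  show ?thesis by (rule pos_from_x[OF q(1,2) t2 refl ndx xlt A B1 B2 C1])
qed

lemma part1:
  fixes q t i :: nat
  assumes q: "odd q" "q \<ge> 3" "t \<ge> 2"
  shows "(\<forall>i. (q ^ t + 1) div 2 \<le> i \<and> i \<le> q ^ t + 1 \<and> \<not> q dvd i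
                 \<and> i \<notin> {(q ^ t + 1) div 2, q ^ t + 1}
                 \<longrightarrow> coset_leader q ((q^(2*t)+1) div 2) i \<and> card (cyc_coset q ((q^(2*t)+1) div 2) i) = 2 * (2*t))
           \<and> \<not> coset_leader q ((q^(2*t)+1) div 2) ((q ^ t + 1) div 2)
           \<and> \<not> coset_leader q ((q^(2*t)+1) div 2) (q ^ t + 1)"
proof -
  have t1: "t \<ge> 1" using q by simp
  note b = basic[OF q(1,2) t1]
  define Q where "Q = q^t"
  define P where "P = q^(t-1)"
  have qP: "q*P = Q" using b(1) unfolding P_def Q_def .
  have h6: "2*((Q+1) div 2) = Q+1" using b(6) unfolding Q_def .
  have qqQ: "q*q \<le> Q" using b(10) q unfolding Q_def by auto
  have qq9: "q*q \<ge> 3*q" using q by (intro mult_le_mono1) auto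
  have "q^1 \<le> q^(t-1)" using q by (intro power_increasing) auto
  hence Pq: "P \<ge> q" unfolding P_def by simp
  have pos: "coset_leader q ((q^(2*t)+1) div 2) i \<and> card (cyc_coset q ((q^(2*t)+1) div 2) i) = 2 * (2*t)"
    if i: "(q ^ t + 1) div 2 \<le> i" "i \<le> q ^ t + 1" "\<not> q dvd i" "i \<notin> {(q ^ t + 1) div 2, q ^ t + 1}" for i
  proof -
    define x where "x = 2*i"
    have i': "(Q+1) div 2 < i" "i \<le> Q" using i unfolding Q_def by auto
    have "i \<noteq> Q" using i(3) b(9) unfolding Q_def by auto
    hence xb: "Q + 3 \<le> x" "x + 2 \<le> 2*Q" using i' h6 unfolding x_def by linarith+
    have ndx: "\<not> q dvd x" using i(3) odd_dvd2[OF q(1)] unfolding x_def by blast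
    have "3*Q \<le> q*Q" using q by (intro mult_le_mono1) auto
    hence xlt: "x < q*Q" using xb by linarith
    have Q0: "Q > 0" using qqQ qq9 q by linarith
    have xdiv: "x div Q = 1"
    proof -
      have "x div Q = Suc ((x - Q) div Q)" using Q0 xb by (intro le_div_geq) auto
      moreover have "(x - Q) div Q = 0" using xb by simp
      ultimately show ?thesis by simp
    qed
    have xmod: "x mod Q = x - Q"
    proof -
      have "x mod Q = (x - Q) mod Q" using xb by (intro le_mod_geq) auto
      thus ?thesis using xb by simp
    qed
    have B1: "x div q^t < x mod q^t" using xdiv xmod xb unfolding Q_def[symmetric] by simp
    have B2: "x div q^t + x mod q^t < q^t" using xdiv xmod xb unfolding Q_def[symmetric] by simp
    have e1: "Q*Q = q*(Q*P)" using qP by (metis mult.assoc mult.commute)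
    have "3*(Q*P) \<le> q*(Q*P)" using q by (intro mult_le_mono1) auto
    moreover have "Q*P \<ge> Q*q" using Pq by simp
    moreover have "Q*q \<ge> 3*Q" using q by simp
    moreover have "x*P \<le> (2*Q)*P" using xb by (intro mult_le_mono1) simp
    moreover have "(2*Q)*P = 2*(Q*P)" by simp
    ultimately have A: "x*P + x < Q*Q + 1" using e1 xb by linarith
    have C1: "(x div P)*(P+1) + 1 < q*Q"
    proof -
      define w where "w = x div P"
      have "x < (2*q)*P" using xb qP by simp
      hence w: "w < 2*q" unfolding w_def by (rule less_mult_imp_div_less)
      have "(w+1)*P \<le> (2*q)*P" using w by (intro mult_le_mono1) simp
      moreover have "(w+1)*P = w*P + P" by (simp add: algebra_simps)
      moreover have "(2*q)*P = 2*Q" using qP by simp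
      moreover have "w*(P+1) = w*P + w" by (simp add: algebra_simps)
      moreover have "3*Q \<le> q*Q" using q by (intro mult_le_mono1) auto
      ultimately have "w*(P+1) + 1 < q*Q" using qqQ qq9 Pq w by linarith
      thus ?thesis unfolding w_def .
    qed
    show ?thesis
      by (rule pos_from_x[OF q(1,2,3) x_def ndx[unfolded Q_def] xlt[unfolded Q_def]
            A[unfolded P_def Q_def] B1 B2 C1[unfolded P_def Q_def]])
  qed
  have Q3: "3 < Q" using qqQ qq9 q by linarith
  have n1: "\<not> coset_leader q ((q^(2*t)+1) div 2) ((q ^ t + 1) div 2)"
  proof -
    have x: "2*((q^t+1) div 2) = 1*q^t + 1" using h6 unfolding Q_def by simp
    have "2*((q^t+1) div 2)*q^t mod (q^t*q^t+1) < 2*((q^t+1) div 2)"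
      by (rule bad_t[OF x]) (use Q3 in \<open>auto simp: Q_def\<close>)
    thus ?thesis by (rule neg_from_x[OF q(1) refl])
  qed
  have n2: "\<not> coset_leader q ((q^(2*t)+1) div 2) (q ^ t + 1)"
  proof -
    have x: "2*(q^t+1) = 2*q^t + 2" by simp
    have "2*(q^t+1)*q^t mod (q^t*q^t+1) < 2*(q^t+1)"
      by (rule bad_t[OF x]) (use Q3 in \<open>auto simp: Q_def\<close>)
    thus ?thesis by (rule neg_from_x[OF q(1) refl])
  qed
  show ?thesis using pos n1 n2 by blast
qed

theorem lemma14:
  fixes q p k t m n :: nat
  assumes "prime p" and "k \<ge> 1" and "q = p ^ k" and "odd q"
    and "m = 2 * t" and "n = (q ^ m + 1) div 2"
  shows "(m \<ge> 4 \<longrightarrow>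
           (\<forall>i. (q ^ t + 1) div 2 \<le> i \<and> i \<le> q ^ t + 1 \<and> \<not> q dvd i
                 \<and> i \<notin> {(q ^ t + 1) div 2, q ^ t + 1}
                 \<longrightarrow> coset_leader q n i \<and> card (cyc_coset q n i) = 2 * m)
           \<and> \<not> coset_leader q n ((q ^ t + 1) div 2)
           \<and> \<not> coset_leader q n (q ^ t + 1))
       \<and> (m \<ge> 8 \<longrightarrow>
           (\<forall>i. (q ^ t + 1) div 2 \<le> i \<and> i \<le> (q ^ (t + 1) - 1) div 2 \<and> \<not> q dvd i
                 \<and> i \<notin> X1 q t \<union> X2 q t \<union> X3 q t \<union> X4 q t \<union> X5 q t
                 \<longrightarrow> coset_leader q n i \<and> card (cyc_coset q n i) = 2 * m)
           \<and> (\<forall>i. (q ^ t + 1) div 2 \<le> i \<and> i \<le> (q ^ (t + 1) - 1) div 2 \<and> \<not> q dvd i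
                 \<and> i \<in> X1 q t \<union> X2 q t \<union> X3 q t \<union> X4 q t \<union> X5 q t
                 \<longrightarrow> \<not> coset_leader q n i))"
proof -
  have p2: "p \<ge> 2" using assms(1) by (rule prime_ge_2_nat)
  have "p^1 \<le> p^k" using assms(2) p2 by (intro power_increasing) auto
  hence "q \<ge> 2" using assms(3) p2 by simp
  moreover have "q \<noteq> 2" using assms(4) by auto
  ultimately have q3: "q \<ge> 3" by simp
  have nn: "n = (q^(2*t)+1) div 2" using assms(5,6) by simp
  show ?thesis
  proof (intro conjI impI)
    assume "4 \<le> m"
    hence t2: "t \<ge> 2" using assms(5) by simp
    note P1 = part1[OF assms(4) q3 t2]
    show "\<forall>i. (q ^ t + 1) div 2 \<le> i \<and> i \<le> q ^ t + 1 \<and> \<not> q dvd i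
                 \<and> i \<notin> {(q ^ t + 1) div 2, q ^ t + 1}
                 \<longrightarrow> coset_leader q n i \<and> card (cyc_coset q n i) = 2 * m"
      using P1 unfolding nn assms(5) by blast
    show "\<not> coset_leader q n ((q ^ t + 1) div 2)" using P1 unfolding nn by blast
    show "\<not> coset_leader q n (q ^ t + 1)" using P1 unfolding nn by blast
  next
    assume "8 \<le> m"
    hence t4: "t \<ge> 4" using assms(5) by simp
    have t1: "t \<ge> 1" using t4 by simp
    show "\<forall>i. (q ^ t + 1) div 2 \<le> i \<and> i \<le> (q ^ (t + 1) - 1) div 2 \<and> \<not> q dvd i
                 \<and> i \<notin> X1 q t \<union> X2 q t \<union> X3 q t \<union> X4 q t \<union> X5 q t
                 \<longrightarrow> coset_leader q n i \<and> card (cyc_coset q n i) = 2 * m"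
    proof (intro allI impI)
      fix i assume h: "(q ^ t + 1) div 2 \<le> i \<and> i \<le> (q ^ (t + 1) - 1) div 2 \<and> \<not> q dvd i
                 \<and> i \<notin> X1 q t \<union> X2 q t \<union> X3 q t \<union> X4 q t \<union> X5 q t"
      have "coset_leader q ((q^(2*t)+1) div 2) i \<and> card (cyc_coset q ((q^(2*t)+1) div 2) i) = 2*(2*t)"
        using h by (intro pos_part2[OF assms(4) q3 t4]) auto
      thus "coset_leader q n i \<and> card (cyc_coset q n i) = 2 * m" unfolding nn assms(5) .
    qed
    show "\<forall>i. (q ^ t + 1) div 2 \<le> i \<and> i \<le> (q ^ (t + 1) - 1) div 2 \<and> \<not> q dvd i
                 \<and> i \<in> X1 q t \<union> X2 q t \<union> X3 q t \<union> X4 q t \<union> X5 q t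
                 \<longrightarrow> \<not> coset_leader q n i"
    proof (intro allI impI)
      fix i assume h: "(q ^ t + 1) div 2 \<le> i \<and> i \<le> (q ^ (t + 1) - 1) div 2 \<and> \<not> q dvd i
                 \<and> i \<in> X1 q t \<union> X2 q t \<union> X3 q t \<union> X4 q t \<union> X5 q t"
      hence "i \<in> X1 q t \<or> i \<in> X2 q t \<or> i \<in> X3 q t \<or> i \<in> X4 q t \<or> i \<in> X5 q t" by blast
      hence "\<not> coset_leader q ((q^(2*t)+1) div 2) i"
        using neg_X1[OF assms(4) q3 t1] neg_X2[OF assms(4) q3 t1] neg_X3[OF assms(4) q3 t1]
          neg_X4[OF assms(4) q3 t1] neg_X5[OF assms(4) q3 t4] by blast
      thus "\<not> coset_leader q n i" unfolding nn .
    qed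
  qed
qed

end
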